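(* Let $G=(V,E)$ be a fixed connected simple undirected graph on $N\ge 2$ nodes, and consider the system on $G$ with update rule $x_i(k+1)=\operatorname{sign}[v_i(k)+\xi_i(k)]$ and noise level $\eta>0$. Let $D=\max_{i\in V}|N_i|$ be the maximum number of nodes in one neighborhood. (i) If $\eta\in(1-2/D,\,1]$, then for every initial condition $x(0)$, with probability one the system converges to agreement: the state eventually becomes (and thereafter remains) either the all-$(+1)$ state or the all-$(-1)$ state. (ii) If $\eta>1$, then for every initial condition, $\mathbf{E}\,S(k)\to 0$ as $k\to\infty$.
   Context: System on a graph: nodes $V=\{1,\dots,N\}$, each node $i$ carries a value $x_i(k)\in\{+1,-1\}$ at each time $k=0,1,2,\dots$. The neighborhood $N_i$ of node $i$ is the set consisting of node $i$ itself together with all nodes adjacent to $i$. Set $v_i(k)=\frac{1}{|N_i|}\sum_{j\in N_i}x_j(k)$. The update rule is $x_i(k+1)=\operatorname{sign}[v_i(k)+\xi_i(k)]$, where the noises $\xi_i(k)$ are uniformly distributed on $[-\eta,\eta]$, independent across $i$ and $k$, and independent of the initial state $x(0)$ (which may be arbitrary, possibly random). The state is $x(k)=(x_1(k),\dots,x_N(k))$ and the state sum is $S(k)=\sum_{i=1}^N x_i(k)$; the all-$(+1)$ and all-$(-1)$ states are denoted $+N$ and $-N$. The state process is a Markov chain on $\{\pm1\}^N$. *)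

theory Defs
  imports "HOL-Probability.Probability"
begin

definition simple_graph :: "'a set \<Rightarrow> ('a \<Rightarrow> 'a \<Rightarrow> bool) \<Rightarrow> bool" where
  "simple_graph V E \<longleftrightarrow> finite V \<and> (\<forall>a b. E a b \<longrightarrow> a \<in> V \<and> b \<in> V)
     \<and> (\<forall>a b. E a b \<longrightarrow> E b a) \<and> (\<forall>a. \<not> E a a)"

definition graph_connected :: "'a set \<Rightarrow> ('a \<Rightarrow> 'a \<Rightarrow> bool) \<Rightarrow> bool" where
  "graph_connected V E \<longleftrightarrow> (\<forall>a\<in>V. \<forall>b\<in>V. (\<lambda>u w. u \<in> V \<and> w \<in> V \<and> E u w)\<^sup>*\<^sup>* a b)"

definition nbhd :: "'a set \<Rightarrow> ('a \<Rightarrow> 'a \<Rightarrow> bool) \<Rightarrow> 'a \<Rightarrow> 'a set" where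
  "nbhd V E i = insert i {j \<in> V. E i j}"

definition max_nbhd :: "'a set \<Rightarrow> ('a \<Rightarrow> 'a \<Rightarrow> bool) \<Rightarrow> nat" where
  "max_nbhd V E = Max ((\<lambda>i. card (nbhd V E i)) ` V)"

definition local_avg :: "'a set \<Rightarrow> ('a \<Rightarrow> 'a \<Rightarrow> bool) \<Rightarrow> ('a \<Rightarrow> int) \<Rightarrow> 'a \<Rightarrow> real" where
  "local_avg V E x i = (\<Sum>j\<in>nbhd V E i. real_of_int (x j)) / real (card (nbhd V E i))"

text \<open>Sign function with values in {+1,-1}; the convention at 0 is immaterial
  (the argument is 0 with probability zero).\<close>
definition sign1 :: "real \<Rightarrow> int" where
  "sign1 r = (if r \<ge> 0 then 1 else -1)"

text \<open>Trajectory x(k) driven by a noise realisation \<omega>, \<omega> (i,k) = \<xi>_i(k).\<close>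
primrec traj :: "'a set \<Rightarrow> ('a \<Rightarrow> 'a \<Rightarrow> bool) \<Rightarrow> ('a \<Rightarrow> int) \<Rightarrow> ('a \<times> nat \<Rightarrow> real) \<Rightarrow> nat \<Rightarrow> 'a \<Rightarrow> int" where
  "traj V E x0 \<omega> 0 = x0"
| "traj V E x0 \<omega> (Suc k) = (\<lambda>i. sign1 (local_avg V E (traj V E x0 \<omega> k) i + \<omega> (i, k)))"

definition noise_space :: "real \<Rightarrow> ('a \<times> nat \<Rightarrow> real) measure" where
  "noise_space \<eta> = PiM UNIV (\<lambda>_. uniform_measure lborel {-\<eta>..\<eta>})"

definition state_sum :: "'a set \<Rightarrow> ('a \<Rightarrow> int) \<Rightarrow> real" where
  "state_sum V x = (\<Sum>i\<in>V. real_of_int (x i))"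

end

theory Submission
  imports Defs
begin


abbreviation UM :: "real \<Rightarrow> real measure" where "UM \<eta> \<equiv> uniform_measure lborel {-\<eta>..\<eta>}"

lemma prob_UM: "0 < \<eta> \<Longrightarrow> prob_space (UM \<eta>)"
  by (intro prob_space_uniform_measure) auto

lemma pps: "0 < \<eta> \<Longrightarrow> product_prob_space (\<lambda>_. UM \<eta>)"
  by (simp add: product_prob_space_def product_prob_space_axioms_def product_sigma_finite_def prob_UM prob_space_imp_sigma_finite)

lemma prob_noise: "0<\<eta> \<Longrightarrow> prob_space (noise_space \<eta>)"
  unfolding noise_space_def by (intro prob_space_PiM prob_UM)

lemma indep_coords:
  assumes "0<\<eta>"
  shows "prob_space.indep_vars (noise_space \<eta>) (\<lambda>_. UM \<eta>) (\<lambda>q \<omega>. \<omega> q) UNIV"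
proof -
  interpret product_prob_space "\<lambda>_. UM \<eta>" UNIV using pps assms .
  have h1: "(\<Pi>\<^sub>M i\<in>UNIV. distr (PiM UNIV (\<lambda>_. UM \<eta>)) (UM \<eta>) (\<lambda>x. x i)) = PiM UNIV (\<lambda>_. UM \<eta>)"
    by (intro PiM_cong refl) (simp add: PiM_component)
  moreover have r: "(\<lambda>x. restrict x UNIV) = (\<lambda>x. x)" by (simp add: restrict_def)
  moreover have h3: "distr (PiM UNIV (\<lambda>_. UM \<eta>)) (PiM UNIV (\<lambda>_. UM \<eta>)) (\<lambda>x. restrict x UNIV) = PiM UNIV (\<lambda>_. UM \<eta>)"
    unfolding r by (rule distr_id)
  show ?thesis unfolding noise_space_def
    apply (subst P.indep_vars_iff_distr_eq_PiM)
      apply simp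
     apply simp
    apply (subst h1)
    apply (rule h3)
    done
qed

lemma sign1_real: "real_of_int (sign1 r) = (if 0 \<le> r then 1 else -1)"
  by (simp add: sign1_def)

lemma traj_local:
  "(\<And>p. snd p < k \<Longrightarrow> \<omega> p = \<omega>' p) \<Longrightarrow> traj V E x0 \<omega> k = traj V E x0 \<omega>' k"
proof (induction k)
  case 0 then show ?case by simp
next
  case (Suc k)
  then have "traj V E x0 \<omega> k = traj V E x0 \<omega>' k" by simp
  moreover have "\<And>i. \<omega> (i,k) = \<omega>' (i,k)" using Suc.prems by simp
  ultimately show ?case by simp
qed

lemma UM_meas_eq: "measurable N (UM \<eta>) = measurable N borel"
  by (rule measurable_cong_sets) auto

lemma traj_meas:
  assumes "\<And>p. snd p < k \<Longrightarrow> p \<in> I"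
  shows "(\<lambda>x. real_of_int (traj V E x0 x k i)) \<in> borel_measurable (PiM I (\<lambda>_. UM \<eta>))"
  using assms
proof (induction k arbitrary: i)
  case 0 then show ?case by simp
next
  case (Suc k)
  have IH[measurable]: "\<And>j. (\<lambda>x. real_of_int (traj V E x0 x k j)) \<in> borel_measurable (PiM I (\<lambda>_. UM \<eta>))"
    using Suc by auto
  have "(i,k) \<in> I" using Suc.prems by auto
  then have c[measurable]: "(\<lambda>x. x (i,k)) \<in> borel_measurable (PiM I (\<lambda>_. UM \<eta>))"
    using measurable_component_singleton[of "(i,k)" I "\<lambda>_. UM \<eta>"] UM_meas_eq by metis
  show ?case
    unfolding traj.simps sign1_real local_avg_def by measurable
qed

lemma coin_integral:
  assumes "1 < \<eta>" "\<bar>a\<bar> \<le> 1"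
  shows "(\<integral>y. real_of_int (sign1 (a + y)) \<partial>UM \<eta>) = a / \<eta>"
proof -
  interpret prob_space "UM \<eta>" using assms by (intro prob_UM) auto
  have eq: "(\<lambda>y. real_of_int (sign1 (a + y))) = (\<lambda>y. 2 * indicator {-a..} y - 1)"
    by (auto simp: sign1_real fun_eq_iff split: split_indicator)
  have m: "measure (UM \<eta>) {-a..} = (\<eta> + a) / (2 * \<eta>)"
  proof -
    have "measure (UM \<eta>) {-a..} = measure lborel ({-\<eta>..\<eta>} \<inter> {-a..}) / measure lborel {-\<eta>..\<eta>}"
      using assms by (intro measure_uniform_measure) auto
    also have "{-\<eta>..\<eta>} \<inter> {-a..} = {-a..\<eta>}" using assms by auto
    finally show ?thesis using assms by simp
  qed
  have "(\<integral>y. real_of_int (sign1 (a + y)) \<partial>UM \<eta>) = 2 * measure (UM \<eta>) {-a..} - 1"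
    unfolding eq
  proof -
    have i1: "integrable (UM \<eta>) (\<lambda>y. 2 * indicator {-a..} y :: real)"
    proof -
      have fin: "emeasure (UM \<eta>) {-a..} < \<top>" using emeasure_le_1[of "{-a..}"] by (simp del: emeasure_uniform_measure add: order.strict_trans1)
      show ?thesis using fin by (intro integrable_mult_right integrable_real_indicator) (auto simp del: emeasure_uniform_measure)
    qed
    have "expectation (\<lambda>y. 2 * indicator {-a..} y - 1::real) = expectation (\<lambda>y. 2 * indicator {-a..} y) - expectation (\<lambda>y. 1)"
      by (rule Bochner_Integration.integral_diff[OF i1]) auto
    moreover have "prob UNIV = 1" using prob_space by simp
    ultimately show "expectation (\<lambda>y. 2 * indicator {-a..} y - 1) = 2 * prob {-a..} - 1"
      by simp
  qed
  also have "\<dots> = a / \<eta>" using assms unfolding m by (simp add: field_simps)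
  finally show ?thesis .
qed

lemma step_integral:
  fixes q :: "'a \<times> nat"
  assumes eta: "1 < \<eta>" and F: "F \<in> borel_measurable (PiM I (\<lambda>_. UM \<eta>))" and q: "q \<notin> I"
    and bnd: "\<And>x. \<bar>F x\<bar> \<le> 1"
  shows "(\<integral>\<omega>. real_of_int (sign1 (F (restrict \<omega> I) + \<omega> q)) \<partial>noise_space \<eta>)
       = (\<integral>\<omega>. F (restrict \<omega> I) / \<eta> \<partial>noise_space \<eta>)"
proof -
  have eta0: "0 < \<eta>" using eta by simp
  interpret NS: prob_space "noise_space \<eta>" using prob_noise eta0 .
  interpret U: prob_space "UM \<eta>" using prob_UM eta0 .
  define f where "f = (\<lambda>\<omega>. F (restrict \<omega> I))"
  define Y where "Y = (\<lambda>\<omega>::'a \<times> nat \<Rightarrow> real. \<omega> q)"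
  have ind: "NS.indep_var (PiM I (\<lambda>_. UM \<eta>)) (\<lambda>\<omega>. restrict (\<lambda>i. \<omega> i) I) (PiM {q} (\<lambda>_. UM \<eta>)) (\<lambda>\<omega>. restrict (\<lambda>i. \<omega> i) {q})"
    using q by (intro NS.indep_var_restrict[OF indep_coords[OF eta0]]) auto
  have Yq: "(\<lambda>x. x q) \<in> borel_measurable (PiM {q} (\<lambda>_. UM \<eta>))"
    using measurable_component_singleton[of q "{q}" "\<lambda>_. UM \<eta>"] UM_meas_eq by auto
  have "NS.indep_var borel (F \<circ> (\<lambda>\<omega>. restrict (\<lambda>i. \<omega> i) I)) borel ((\<lambda>x. x q) \<circ> (\<lambda>\<omega>. restrict (\<lambda>i. \<omega> i) {q}))"
    by (rule NS.indep_var_compose[OF ind F Yq])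
  moreover have "(F \<circ> (\<lambda>\<omega>. restrict (\<lambda>i. \<omega> i) I)) = f" by (simp add: f_def o_def)
  moreover have "((\<lambda>x. x q) \<circ> (\<lambda>\<omega>. restrict (\<lambda>i. \<omega> i) {q})) = Y" by (simp add: Y_def o_def fun_eq_iff)
  ultimately have ind2: "NS.indep_var borel f borel Y" by simp
  then have rvf[measurable]: "f \<in> borel_measurable (noise_space \<eta>)" and rvY[measurable]: "Y \<in> borel_measurable (noise_space \<eta>)"
    and dist: "distr (noise_space \<eta>) borel f \<Otimes>\<^sub>M distr (noise_space \<eta>) borel Y = distr (noise_space \<eta>) (borel \<Otimes>\<^sub>M borel) (\<lambda>x. (f x, Y x))"
    unfolding NS.indep_var_distribution_eq by auto
  have dY: "distr (noise_space \<eta>) borel Y = UM \<eta>"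
  proof -
    interpret PS: product_prob_space "\<lambda>_. UM \<eta>" UNIV using pps eta0 .
    have "distr (noise_space \<eta>) borel Y = distr (noise_space \<eta>) (UM \<eta>) Y"
      by (rule distr_cong) auto
    also have "\<dots> = UM \<eta>" unfolding noise_space_def Y_def by (rule PS.PiM_component) simp
    finally show ?thesis .
  qed
  define Pf where "Pf = distr (noise_space \<eta>) borel f"
  interpret Pf: prob_space Pf unfolding Pf_def by (rule NS.prob_space_distr) simp
  interpret PP: pair_prob_space Pf "UM \<eta>" ..
  define h where "h = (\<lambda>p::real\<times>real. real_of_int (sign1 (fst p + snd p)))"
  have hm[measurable]: "h \<in> borel_measurable (borel \<Otimes>\<^sub>M borel)"
    unfolding h_def sign1_real by measurable
  have hm2: "h \<in> borel_measurable (Pf \<Otimes>\<^sub>M UM \<eta>)"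
    using hm by (simp add: Pf_def cong: measurable_cong_sets)
  have "(\<integral>\<omega>. real_of_int (sign1 (f \<omega> + Y \<omega>)) \<partial>noise_space \<eta>) = (\<integral>\<omega>. h (f \<omega>, Y \<omega>) \<partial>noise_space \<eta>)"
    by (simp add: h_def)
  also have "\<dots> = integral\<^sup>L (distr (noise_space \<eta>) (borel \<Otimes>\<^sub>M borel) (\<lambda>x. (f x, Y x))) h"
    by (rule integral_distr[symmetric]) auto
  also have "\<dots> = integral\<^sup>L (Pf \<Otimes>\<^sub>M UM \<eta>) h"
    using dist dY by (simp add: Pf_def)
  also have "\<dots> = (\<integral>a. (\<integral>y. h (a, y) \<partial>UM \<eta>) \<partial>Pf)"
  proof (rule PP.integral_fst'[symmetric])
    show "integrable (Pf \<Otimes>\<^sub>M UM \<eta>) h"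
      using hm2 by (intro PP.integrable_const_bound[where B=1]) (auto simp: h_def sign1_def)
  qed
  also have "\<dots> = (\<integral>a. a / \<eta> \<partial>Pf)"
  proof (rule integral_cong_AE)
    show "AE a in Pf. (\<integral>y. h (a, y) \<partial>UM \<eta>) = a / \<eta>"
    proof -
      have "AE a in Pf. \<bar>a\<bar> \<le> 1"
        unfolding Pf_def using bnd rvf by (subst AE_distr_iff) (auto simp: f_def)
      then show ?thesis
        by eventually_elim (simp add: h_def coin_integral[OF eta])
    qed
  qed (use hm2 in \<open>auto simp: Pf_def\<close>)
  also have "\<dots> = (\<integral>\<omega>. f \<omega> / \<eta> \<partial>noise_space \<eta>)"
    unfolding Pf_def by (rule integral_distr) auto
  finally show ?thesis by (simp add: f_def Y_def)
qed

lemma nbhd_sub: "i \<in> V \<Longrightarrow> nbhd V E i \<subseteq> V"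
  by (auto simp: nbhd_def)

lemma nbhd_fin: "finite V \<Longrightarrow> finite (nbhd V E i)"
  by (auto simp: nbhd_def)

lemma nbhd_card: "finite V \<Longrightarrow> 0 < card (nbhd V E i)"
  using nbhd_fin[of V E i] by (auto simp: nbhd_def card_gt_0_iff)

lemma traj_pm: "(\<forall>i\<in>V. x0 i \<in> {1,-1}) \<Longrightarrow> i \<in> V \<Longrightarrow> traj V E x0 \<omega> k i \<in> {1,-1}"
  by (cases k) (auto simp: sign1_def)

lemma avg_bound:
  assumes "finite V" "i \<in> V" "\<forall>j\<in>V. y j \<in> {1,-1}"
  shows "\<bar>local_avg V E y i\<bar> \<le> 1"
proof -
  have "\<bar>\<Sum>j\<in>nbhd V E i. real_of_int (y j)\<bar> \<le> (\<Sum>j\<in>nbhd V E i. \<bar>real_of_int (y j)\<bar>)"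
    by (rule sum_abs)
  also have "\<dots> = (\<Sum>j\<in>nbhd V E i. 1)"
  proof (intro sum.cong refl)
    fix j assume "j \<in> nbhd V E i"
    then have "j \<in> V" using nbhd_sub[OF assms(2)] by blast
    then show "\<bar>real_of_int (y j)\<bar> = 1" using assms(3) by auto
  qed
  finally have "\<bar>\<Sum>j\<in>nbhd V E i. real_of_int (y j)\<bar> \<le> real (card (nbhd V E i))" by simp
  then show ?thesis using nbhd_card[OF assms(1), of E i]
    by (simp add: local_avg_def abs_divide)
qed

lemma traj_int:
  assumes "0 < \<eta>" "finite V" "\<forall>i\<in>V. x0 i \<in> {1,-1}" "i \<in> V"
  shows "integrable (noise_space \<eta>) (\<lambda>\<omega>. real_of_int (traj V E x0 \<omega> k i))"
proof -
  interpret NS: prob_space "noise_space \<eta>" using prob_noise assms(1) .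
  show ?thesis
  proof (rule NS.integrable_const_bound[where B=1])
    show "AE x in noise_space \<eta>. norm (real_of_int (traj V E x0 x k i)) \<le> 1"
    proof (rule AE_I2)
      fix x show "norm (real_of_int (traj V E x0 x k i)) \<le> 1"
        using traj_pm[OF assms(3,4), of E x k] by auto
    qed
    show "(\<lambda>x. real_of_int (traj V E x0 x k i)) \<in> borel_measurable (noise_space \<eta>)"
      unfolding noise_space_def by (rule traj_meas) simp
  qed
qed

lemma aux_div: "\<bar>z\<bar> \<le> b \<Longrightarrow> 1 < (\<eta>::real) \<Longrightarrow> \<bar>z / \<eta>\<bar> \<le> b / \<eta>"
  by (simp add: abs_divide divide_right_mono)

lemma mean_bound:
  assumes eta: "1 < \<eta>" and fin: "finite V" and x0: "\<forall>i\<in>V. x0 i \<in> {1,-1}"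
  shows "\<forall>i\<in>V. \<bar>\<integral>\<omega>. real_of_int (traj V E x0 \<omega> k i) \<partial>noise_space \<eta>\<bar> \<le> (1/\<eta>)^k"
proof (induction k)
  case 0
  have meas: "measure (noise_space \<eta> :: ('a \<times> nat \<Rightarrow> real) measure) (space (noise_space \<eta>)) = 1"
    by (rule prob_space.prob_space[OF prob_noise]) (use eta in simp)
  show ?case
  proof
    fix i assume "i \<in> V"
    then have "x0 i = 1 \<or> x0 i = -1" using x0 by auto
    then show "\<bar>\<integral>\<omega>. real_of_int (traj V E x0 \<omega> 0 i) \<partial>noise_space \<eta>\<bar> \<le> (1/\<eta>)^0"
      using meas by auto
  qed
next
  case (Suc k)
  show ?case
  proof
    fix i assume i: "i \<in> V"
    define I where "I = {p::'a\<times>nat. snd p < k}"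
    define F where "F = (\<lambda>x. local_avg V E (traj V E x0 x k) i)"
    have Fm: "F \<in> borel_measurable (PiM I (\<lambda>_. UM \<eta>))"
      unfolding F_def local_avg_def
      by (intro borel_measurable_divide borel_measurable_sum traj_meas borel_measurable_const) (auto simp: I_def)
    have Fb: "\<bar>F x\<bar> \<le> 1" for x
      unfolding F_def using avg_bound[OF fin i] traj_pm[OF x0] by blast
    have tr: "traj V E x0 \<omega> (Suc k) i = sign1 (F (restrict \<omega> I) + \<omega> (i,k))" for \<omega>
    proof -
      have "traj V E x0 (restrict \<omega> I) k = traj V E x0 \<omega> k"
        by (rule traj_local) (simp add: I_def)
      then show ?thesis by (simp add: F_def)
    qed
    have "(\<integral>\<omega>. real_of_int (traj V E x0 \<omega> (Suc k) i) \<partial>noise_space \<eta>)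
        = (\<integral>\<omega>. F (restrict \<omega> I) / \<eta> \<partial>noise_space \<eta>)"
      unfolding tr by (rule step_integral[OF eta Fm _ Fb]) (simp add: I_def)
    also have "\<dots> = (\<integral>\<omega>. local_avg V E (traj V E x0 \<omega> k) i / \<eta> \<partial>noise_space \<eta>)"
    proof -
      have "F (restrict \<omega> I) = local_avg V E (traj V E x0 \<omega> k) i" for \<omega>
        unfolding F_def by (subst traj_local[of k _ \<omega>]) (auto simp: I_def)
      then show ?thesis by simp
    qed
    also have "\<dots> = (\<Sum>j\<in>nbhd V E i. (\<integral>\<omega>. real_of_int (traj V E x0 \<omega> k j) \<partial>noise_space \<eta>)) / real (card (nbhd V E i)) / \<eta>"
    proof -
      have ints: "integrable (noise_space \<eta>) (\<lambda>\<omega>. real_of_int (traj V E x0 \<omega> k j))" if "j \<in> nbhd V E i" for j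
        using nbhd_sub[OF i, of E] that eta by (intro traj_int[OF _ fin x0]) auto
      show ?thesis unfolding local_avg_def
        by (simp add: Bochner_Integration.integral_sum[where I="nbhd V E i" and M="noise_space \<eta>" and f="\<lambda>j \<omega>. real_of_int (traj V E x0 \<omega> k j)", OF ints])
    qed
    finally have eq: "(\<integral>\<omega>. real_of_int (traj V E x0 \<omega> (Suc k) i) \<partial>noise_space \<eta>) = \<dots>" .
    have "\<bar>\<Sum>j\<in>nbhd V E i. (\<integral>\<omega>. real_of_int (traj V E x0 \<omega> k j) \<partial>noise_space \<eta>)\<bar>
          \<le> (\<Sum>j\<in>nbhd V E i. (1/\<eta>)^k)"
      using Suc.IH nbhd_sub[OF i, of E] by (intro order.trans[OF sum_abs] sum_mono) auto
    then have "\<bar>\<Sum>j\<in>nbhd V E i. (\<integral>\<omega>. real_of_int (traj V E x0 \<omega> k j) \<partial>noise_space \<eta>)\<bar>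
          \<le> real (card (nbhd V E i)) * (1/\<eta>)^k" by simp
    then have "\<bar>(\<Sum>j\<in>nbhd V E i. (\<integral>\<omega>. real_of_int (traj V E x0 \<omega> k j) \<partial>noise_space \<eta>)) / real (card (nbhd V E i))\<bar> \<le> (1/\<eta>)^k"
      using nbhd_card[OF fin, of E i] by (simp add: abs_divide divide_le_eq mult.commute)
    then have "\<bar>(\<Sum>j\<in>nbhd V E i. (\<integral>\<omega>. real_of_int (traj V E x0 \<omega> k j) \<partial>noise_space \<eta>)) / real (card (nbhd V E i)) / \<eta>\<bar> \<le> (1/\<eta>)^k / \<eta>"
      using eta by (rule aux_div)
    then show "\<bar>\<integral>\<omega>. real_of_int (traj V E x0 \<omega> (Suc k) i) \<partial>noise_space \<eta>\<bar> \<le> (1/\<eta>)^Suc k"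
      unfolding eq by (simp add: field_simps)
  qed
qed

lemma part2:
  assumes eta: "1 < \<eta>" and fin: "finite V" and x0: "\<forall>i\<in>V. x0 i \<in> {1,-1}"
  shows "(\<lambda>k. \<integral>\<omega>. state_sum V (traj V E x0 \<omega> k) \<partial>noise_space \<eta>) \<longlonglongrightarrow> 0"
proof (rule Lim_null_comparison)
  have ints: "integrable (noise_space \<eta>) (\<lambda>\<omega>. real_of_int (traj V E x0 \<omega> k j))" if "j \<in> V" for j k
    using that eta by (intro traj_int[OF _ fin x0]) auto
  show "\<forall>\<^sub>F k in sequentially. norm (\<integral>\<omega>. state_sum V (traj V E x0 \<omega> k) \<partial>noise_space \<eta>) \<le> real (card V) * (1/\<eta>)^k"
  proof (rule always_eventually, rule allI)
    fix k
    have A: "(\<integral>\<omega>. state_sum V (traj V E x0 \<omega> k) \<partial>noise_space \<eta>)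
        = (\<Sum>i\<in>V. \<integral>\<omega>. real_of_int (traj V E x0 \<omega> k i) \<partial>noise_space \<eta>)"
      unfolding state_sum_def
      by (rule Bochner_Integration.integral_sum[where I=V and M="noise_space \<eta>" and f="\<lambda>j \<omega>. real_of_int (traj V E x0 \<omega> k j)", OF ints])
    have B: "\<bar>\<Sum>i\<in>V. \<integral>\<omega>. real_of_int (traj V E x0 \<omega> k i) \<partial>noise_space \<eta>\<bar> \<le> (\<Sum>i\<in>V. \<bar>\<integral>\<omega>. real_of_int (traj V E x0 \<omega> k i) \<partial>noise_space \<eta>\<bar>)"
      by (rule sum_abs)
    have C: "(\<Sum>i\<in>V. \<bar>\<integral>\<omega>. real_of_int (traj V E x0 \<omega> k i) \<partial>noise_space \<eta>\<bar>) \<le> (\<Sum>i\<in>V. (1/\<eta>)^k)"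
      using mean_bound[OF eta fin x0, of E k] by (intro sum_mono) auto
    show "norm (\<integral>\<omega>. state_sum V (traj V E x0 \<omega> k) \<partial>noise_space \<eta>) \<le> real (card V) * (1/\<eta>)^k"
      unfolding real_norm_def A using B C by (simp only: sum_constant)
  qed
  show "(\<lambda>k. real (card V) * (1/\<eta>)^k) \<longlonglongrightarrow> 0"
    using eta by (intro tendsto_mult_right_zero LIMSEQ_power_zero) auto
qed

lemma local_avg_all:
  assumes "finite V" "i \<in> V" "\<forall>j\<in>V. y j = s"
  shows "local_avg V E y i = real_of_int s"
proof -
  have "(\<Sum>j\<in>nbhd V E i. real_of_int (y j)) = (\<Sum>j\<in>nbhd V E i. real_of_int s)"
    using assms nbhd_sub[OF assms(2), of E] by (intro sum.cong) auto
  then show ?thesis using nbhd_card[OF assms(1), of E i] by (simp add: local_avg_def)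
qed

lemma absorb_plus:
  assumes fin: "finite V" and eta: "\<eta> \<le> 1" and G: "\<forall>i\<in>V. \<forall>t. -\<eta> \<le> \<omega> (i,t)"
    and P: "\<forall>i\<in>V. traj V E x0 \<omega> k i = 1"
  shows "\<forall>i\<in>V. traj V E x0 \<omega> (k+n) i = 1"
proof (induction n)
  case 0 then show ?case using P by simp
next
  case (Suc n)
  show ?case
  proof
    fix i assume i: "i \<in> V"
    have "local_avg V E (traj V E x0 \<omega> (k+n)) i = 1"
      using local_avg_all[OF fin i, of "traj V E x0 \<omega> (k+n)" 1 E] Suc by simp
    moreover have "-\<eta> \<le> \<omega> (i, k+n)" using G i by blast
    ultimately show "traj V E x0 \<omega> (k + Suc n) i = 1" using eta by (simp add: sign1_def)
  qed
qed

lemma absorb_minus: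
  assumes fin: "finite V" and eta: "\<eta> \<le> 1" and G: "\<forall>i\<in>V. \<forall>t. \<omega> (i,t) < \<eta>"
    and P: "\<forall>i\<in>V. traj V E x0 \<omega> k i = -1"
  shows "\<forall>i\<in>V. traj V E x0 \<omega> (k+n) i = -1"
proof (induction n)
  case 0 then show ?case using P by simp
next
  case (Suc n)
  show ?case
  proof
    fix i assume i: "i \<in> V"
    have "local_avg V E (traj V E x0 \<omega> (k+n)) i = -1"
      using local_avg_all[OF fin i, of "traj V E x0 \<omega> (k+n)" "-1" E] Suc by simp
    moreover have "\<omega> (i, k+n) < \<eta>" using G i by blast
    ultimately show "traj V E x0 \<omega> (k + Suc n) i = -1" using eta by (simp add: sign1_def)
  qed
qed

lemma sum_one_plus:
  assumes "finite N" "p \<in> N" "y p = 1" "\<forall>j\<in>N. y j \<in> {1,-1}"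
  shows "2 - real (card N) \<le> (\<Sum>j\<in>N. real_of_int (y j))"
proof -
  have "(\<Sum>j\<in>N. real_of_int (y j)) = real_of_int (y p) + (\<Sum>j\<in>N-{p}. real_of_int (y j))"
    using assms by (simp add: sum.remove)
  moreover have "(\<Sum>j\<in>N-{p}. (-1::real)) \<le> (\<Sum>j\<in>N-{p}. real_of_int (y j))"
    using assms(4) by (intro sum_mono) auto
  moreover have "card (N - {p}) = card N - 1" using assms by simp
  moreover have "card N \<ge> 1" using assms by (metis card_0_eq empty_iff less_one not_less)
  ultimately show ?thesis using assms(3) by (simp add: of_nat_diff)
qed

lemma nbhd_le_max: "finite V \<Longrightarrow> i \<in> V \<Longrightarrow> card (nbhd V E i) \<le> max_nbhd V E"
  unfolding max_nbhd_def by (intro Max_ge) auto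

lemma step_char:
  assumes sg: "simple_graph V E" and i: "i \<in> V"
    and vals: "\<forall>j\<in>V. traj V E x0 \<omega> t j \<in> {1,-1}"
    and lo: "1 - 2 / real (max_nbhd V E) < \<omega> (i,t)" and hi: "\<omega> (i,t) < \<eta>" and eta: "\<eta> \<le> 1"
  shows "traj V E x0 \<omega> (Suc t) i = 1 \<longleftrightarrow> (\<exists>j\<in>nbhd V E i. traj V E x0 \<omega> t j = 1)"
proof -
  have fin: "finite V" using sg by (simp add: simple_graph_def)
  define y where "y = traj V E x0 \<omega> t"
  define n where "n = card (nbhd V E i)"
  have n0: "0 < n" unfolding n_def using nbhd_card[OF fin] .
  have nD: "n \<le> max_nbhd V E" unfolding n_def using nbhd_le_max[OF fin i] .
  have yv: "\<forall>j\<in>nbhd V E i. y j \<in> {1,-1}" using vals nbhd_sub[OF i, of E] y_def by blast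
  show ?thesis
  proof
    assume "traj V E x0 \<omega> (Suc t) i = 1"
    show "\<exists>j\<in>nbhd V E i. traj V E x0 \<omega> t j = 1"
    proof (rule ccontr)
      assume "\<not> ?thesis"
      then have "\<forall>j\<in>nbhd V E i. y j = -1" using yv y_def by auto
      then have "(\<Sum>j\<in>nbhd V E i. real_of_int (y j)) = (\<Sum>j\<in>nbhd V E i. -1)" by (intro sum.cong) auto
      then have "local_avg V E y i = -1" using n0 by (simp add: local_avg_def n_def)
      then have "traj V E x0 \<omega> (Suc t) i = -1" using hi eta by (simp add: y_def sign1_def)
      with \<open>traj V E x0 \<omega> (Suc t) i = 1\<close> show False by simp
    qed
  next
    assume "\<exists>j\<in>nbhd V E i. traj V E x0 \<omega> t j = 1"
    then obtain p where p: "p \<in> nbhd V E i" "y p = 1" using y_def by auto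
    have s: "2 - real n \<le> (\<Sum>j\<in>nbhd V E i. real_of_int (y j))"
      unfolding n_def using sum_one_plus[OF nbhd_fin[OF fin] p yv] .
    have "(2 - real n) / real n \<le> local_avg V E y i"
      unfolding local_avg_def n_def[symmetric] using s n0 by (intro divide_right_mono) auto
    moreover have "(2 - real n) / real n = 2 / real n - 1" using n0 by (simp add: field_simps)
    moreover have "2 / real (max_nbhd V E) \<le> 2 / real n" using n0 nD by (intro divide_left_mono) auto
    ultimately have "0 < local_avg V E y i + \<omega> (i,t)" using lo by linarith
    then show "traj V E x0 \<omega> (Suc t) i = 1" by (simp add: y_def sign1_def)
  qed
qed

lemma closure_all:
  assumes conn: "graph_connected V E" and S: "S \<subseteq> V" "p \<in> S"
    and cl: "\<forall>i\<in>S. \<forall>j\<in>V. E i j \<longrightarrow> j \<in> S"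
  shows "S = V"
proof
  show "V \<subseteq> S"
  proof
    fix b assume b: "b \<in> V"
    have "p \<in> V" using S by auto
    then have r: "(\<lambda>u w. u \<in> V \<and> w \<in> V \<and> E u w)\<^sup>*\<^sup>* p b" using conn b by (simp add: graph_connected_def)
    then show "b \<in> S"
    proof (induction rule: rtranclp_induct)
      case base then show ?case using S by simp
    next
      case (step u w) then show ?case using cl by blast
    qed
  qed
qed (use S in auto)

lemma spread:
  assumes sg: "simple_graph V E" and conn: "graph_connected V E"
    and x0: "\<forall>i\<in>V. x0 i \<in> {1,-1}" and eta: "\<eta> \<le> 1"
    and B: "\<forall>s<card V. \<forall>i\<in>V. 1 - 2 / real (max_nbhd V E) < \<omega> (i,a+s) \<and> \<omega> (i,a+s) < \<eta>"
    and ne: "\<exists>p\<in>V. traj V E x0 \<omega> a p = 1"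
  shows "s \<le> card V \<Longrightarrow> {i\<in>V. traj V E x0 \<omega> (a+s) i = 1} = V \<or> s+1 \<le> card {i\<in>V. traj V E x0 \<omega> (a+s) i = 1}"
proof (induction s)
  have fin: "finite V" using sg by (simp add: simple_graph_def)
  case 0
  from ne obtain p where "p \<in> V" "traj V E x0 \<omega> a p = 1" by blast
  then have "{i\<in>V. traj V E x0 \<omega> (a+0) i = 1} \<noteq> {}" by auto
  then show ?case using fin by (simp add: card_gt_0_iff Suc_le_eq)
next
  case (Suc s)
  have fin: "finite V" using sg by (simp add: simple_graph_def)
  define P where "P = (\<lambda>s. {i\<in>V. traj V E x0 \<omega> (a+s) i = 1})"
  have sL: "s < card V" using Suc.prems by simp
  have IH: "P s = V \<or> s+1 \<le> card (P s)" using Suc.IH sL unfolding P_def by simp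
  have vals: "\<forall>j\<in>V. traj V E x0 \<omega> (a+s) j \<in> {1,-1}" using traj_pm[OF x0] by blast
  have ch: "traj V E x0 \<omega> (Suc (a+s)) i = 1 \<longleftrightarrow> (\<exists>j\<in>nbhd V E i. traj V E x0 \<omega> (a+s) j = 1)" if "i \<in> V" for i
    using B sL that by (intro step_char[OF sg that vals _ _ eta]) auto
  have sub: "P s \<subseteq> P (Suc s)"
  proof
    fix i assume "i \<in> P s"
    then show "i \<in> P (Suc s)" using ch[of i] by (auto simp: P_def nbhd_def)
  qed
  have PV: "P (Suc s) \<subseteq> V" by (auto simp: P_def)
  show ?case
  proof (cases "P s = V")
    case True
    then have "P (Suc s) = V" using sub PV by auto
    then show ?thesis by (simp add: P_def)
  next
    case False
    then have cs: "s+1 \<le> card (P s)" using IH by simp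
    then obtain p where p: "p \<in> P s" by (metis card.empty empty_iff le_zero_eq add_is_0 one_neq_zero subsetI subset_antisym)
    have "\<not> (\<forall>i\<in>P s. \<forall>j\<in>V. E i j \<longrightarrow> j \<in> P s)"
      using closure_all[OF conn _ p] False by (auto simp: P_def)
    then obtain i j where ij: "i \<in> P s" "j \<in> V" "E i j" "j \<notin> P s" by blast
    have "E j i" using sg ij(3) by (simp add: simple_graph_def)
    then have "i \<in> nbhd V E j" using ij(1) by (auto simp: nbhd_def P_def)
    then have "j \<in> P (Suc s)" using ch[OF ij(2)] ij(1,2) by (auto simp: P_def)
    then have "insert j (P s) \<subseteq> P (Suc s)" using sub by auto
    then have "card (insert j (P s)) \<le> card (P (Suc s))"
      using PV fin by (intro card_mono) (auto intro: finite_subset)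
    moreover have "card (insert j (P s)) = card (P s) + 1"
      using ij(4) fin by (subst card_insert_disjoint) (auto intro: finite_subset simp: P_def)
    ultimately show ?thesis using cs by (simp add: P_def)
  qed
qed

lemma det_consensus:
  assumes sg: "simple_graph V E" and conn: "graph_connected V E"
    and x0: "\<forall>i\<in>V. x0 i \<in> {1,-1}" and eta: "\<eta> \<le> 1"
    and G: "\<forall>i\<in>V. \<forall>t. -\<eta> \<le> \<omega> (i,t) \<and> \<omega> (i,t) < \<eta>"
    and B: "\<forall>i\<in>V. \<forall>t. a \<le> t \<and> t < a + card V \<longrightarrow> 1 - 2 / real (max_nbhd V E) < \<omega> (i,t)"
  shows "\<exists>K. (\<forall>k\<ge>K. \<forall>i\<in>V. traj V E x0 \<omega> k i = 1) \<or> (\<forall>k\<ge>K. \<forall>i\<in>V. traj V E x0 \<omega> k i = -1)"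
proof -
  have fin: "finite V" using sg by (simp add: simple_graph_def)
  have Gl: "\<forall>i\<in>V. \<forall>t. -\<eta> \<le> \<omega> (i,t)" and Gh: "\<forall>i\<in>V. \<forall>t. \<omega> (i,t) < \<eta>" using G by auto
  show ?thesis
  proof (cases "\<exists>p\<in>V. traj V E x0 \<omega> a p = 1")
    case True
    have B': "\<forall>s<card V. \<forall>i\<in>V. 1 - 2 / real (max_nbhd V E) < \<omega> (i,a+s) \<and> \<omega> (i,a+s) < \<eta>"
      using B G by auto
    have "{i\<in>V. traj V E x0 \<omega> (a+card V) i = 1} = V \<or> card V+1 \<le> card {i\<in>V. traj V E x0 \<omega> (a+card V) i = 1}"
      by (rule spread[OF sg conn x0 eta B' True]) simp
    moreover have "card {i\<in>V. traj V E x0 \<omega> (a+card V) i = 1} \<le> card V"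
      using fin by (intro card_mono) auto
    ultimately have "{i\<in>V. traj V E x0 \<omega> (a+card V) i = 1} = V" by linarith
    then have all: "\<forall>i\<in>V. traj V E x0 \<omega> (a+card V) i = 1" by auto
    have "\<forall>k\<ge>a+card V. \<forall>i\<in>V. traj V E x0 \<omega> k i = 1"
    proof (intro allI impI)
      fix k assume "a + card V \<le> k"
      then have "k = (a + card V) + (k - (a + card V))" by simp
      then show "\<forall>i\<in>V. traj V E x0 \<omega> k i = 1"
        using absorb_plus[OF fin eta Gl all, of "k - (a + card V)"] by metis
    qed
    then show ?thesis by blast
  next
    case False
    then have all: "\<forall>i\<in>V. traj V E x0 \<omega> a i = -1" using traj_pm[OF x0] by blast
    have "\<forall>k\<ge>a. \<forall>i\<in>V. traj V E x0 \<omega> k i = -1"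
    proof (intro allI impI)
      fix k assume "a \<le> k"
      then have "k = a + (k - a)" by simp
      then show "\<forall>i\<in>V. traj V E x0 \<omega> k i = -1"
        using absorb_minus[OF fin eta Gh all, of "k - a"] by metis
    qed
    then show ?thesis by blast
  qed
qed

lemma coord_meas[measurable]: "(\<lambda>\<omega>. \<omega> q) \<in> borel_measurable (noise_space \<eta>)"
  unfolding noise_space_def using measurable_component_singleton[of q UNIV "\<lambda>_. UM \<eta>"] UM_meas_eq by auto

lemma AE_good:
  assumes eta: "0 < \<eta>" and fin: "finite V"
  shows "AE \<omega> in noise_space \<eta>. \<forall>i\<in>V. \<forall>t. -\<eta> \<le> \<omega> (i,t) \<and> \<omega> (i,t) < \<eta>"
proof -
  interpret PS: product_prob_space "\<lambda>_. UM \<eta>" UNIV using pps eta .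
  have cnt: "countable (V \<times> (UNIV::nat set))" using fin by (intro countable_SIGMA) (auto intro: countable_finite)
  have U: "AE y in UM \<eta>. -\<eta> \<le> y \<and> y < \<eta>"
  proof (subst AE_uniform_measure)
    show "AE y in lborel. y \<in> {-\<eta>..\<eta>} \<longrightarrow> -\<eta> \<le> y \<and> y < \<eta>"
      using AE_lborel_singleton[of \<eta>] by eventually_elim auto
  qed (use eta in auto)
  have "\<forall>q\<in>V \<times> UNIV. AE \<omega> in noise_space \<eta>. -\<eta> \<le> \<omega> q \<and> \<omega> q < \<eta>"
  proof
    fix q :: "'a \<times> nat"
    show "AE \<omega> in noise_space \<eta>. -\<eta> \<le> \<omega> q \<and> \<omega> q < \<eta>"
      unfolding noise_space_def by (rule PS.AE_component[OF _ U]) simp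
  qed
  then have "AE \<omega> in noise_space \<eta>. \<forall>q\<in>V \<times> UNIV. -\<eta> \<le> \<omega> q \<and> \<omega> q < \<eta>"
    by (subst AE_ball_countable[OF cnt])
  then show ?thesis by eventually_elim auto
qed

lemma AE_block:
  assumes eta: "0 < \<eta>" and c: "c < \<eta>" and fin: "finite V" and ne: "V \<noteq> {}" and L: "0 < L"
  shows "AE \<omega> in noise_space \<eta>. \<exists>m. \<forall>i\<in>V. \<forall>t. m*L \<le> t \<and> t < m*L + L \<longrightarrow> c < \<omega> (i,t)"
proof -
  interpret NS: prob_space "noise_space \<eta>" using prob_noise eta .
  interpret PS: product_prob_space "\<lambda>_. UM \<eta>" UNIV using pps eta .
  have [simp]: "finite V" using fin .
  define K where "K = (\<lambda>m. V \<times> {m*L..<m*L+L})"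
  define BS where "BS = (\<lambda>m. {\<omega>\<in>space (noise_space \<eta>). \<forall>q\<in>K m. c < \<omega> q})"
  have Kfin: "finite (K m)" for m unfolding K_def by simp
  have Kne: "K m \<noteq> {}" for m using ne L unfolding K_def by auto
  have cardK: "card (K m) = card V * L" for m unfolding K_def by (simp add: card_cartesian_product)
  define \<rho> where "\<rho> = measure (UM \<eta>) {c<..}"
  have coord_prob: "NS.prob ((\<lambda>\<omega>. \<omega> q) -` {c<..} \<inter> space (noise_space \<eta>)) = \<rho>" for q
  proof -
    have "(\<lambda>\<omega>. \<omega> q) \<in> measurable (noise_space \<eta>) (UM \<eta>)"
      unfolding noise_space_def by (rule measurable_component_singleton) simp
    then have "NS.prob ((\<lambda>\<omega>. \<omega> q) -` {c<..} \<inter> space (noise_space \<eta>)) = measure (distr (noise_space \<eta>) (UM \<eta>) (\<lambda>\<omega>. \<omega> q)) {c<..}"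
      by (subst measure_distr) auto
    also have "distr (noise_space \<eta>) (UM \<eta>) (\<lambda>\<omega>. \<omega> q) = UM \<eta>"
      unfolding noise_space_def by (rule PS.PiM_component) simp
    finally show ?thesis by (simp add: \<rho>_def)
  qed
  have BS_int: "BS m = (\<Inter>q\<in>K m. (\<lambda>\<omega>. \<omega> q) -` {c<..} \<inter> space (noise_space \<eta>))" for m
    using Kne[of m] unfolding BS_def by auto
  have BS_ev: "BS m \<in> NS.events" for m
    unfolding BS_def by (rule sets.sets_Collect_finite_All[OF _ Kfin]) measurable
  have prob_BS: "NS.prob (BS m) = \<rho> ^ (card V * L)" for m
  proof -
    have "NS.prob (BS m) = (\<Prod>q\<in>K m. NS.prob ((\<lambda>\<omega>. \<omega> q) -` {c<..} \<inter> space (noise_space \<eta>)))"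
      unfolding BS_int by (rule NS.indep_varsD[OF indep_coords[OF eta]]) (auto simp: Kne Kfin)
    also have "\<dots> = \<rho> ^ (card V * L)" by (simp add: coord_prob cardK)
    finally show ?thesis .
  qed
  have \<rho>_pos: "0 < \<rho>"
  proof -
    have "\<rho> = measure lborel ({-\<eta>..\<eta>} \<inter> {c<..}) / measure lborel {-\<eta>..\<eta>}"
      unfolding \<rho>_def using eta by (intro measure_uniform_measure) auto
    moreover have "0 < measure lborel ({-\<eta>..\<eta>} \<inter> {c<..})"
    proof (cases "c < -\<eta>")
      case True
      then have "{-\<eta>..\<eta>} \<inter> {c<..} = {-\<eta>..\<eta>}" by auto
      then show ?thesis using eta by simp
    next
      case False
      then have "{-\<eta>..\<eta>} \<inter> {c<..} = {c<..\<eta>}" by auto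
      then show ?thesis using c by simp
    qed
    moreover have "0 < measure lborel {-\<eta>..\<eta>}" using eta by simp
    ultimately show ?thesis by simp
  qed
  define r where "r = \<rho> ^ (card V * L)"
  have r_pos: "0 < r" unfolding r_def using \<rho>_pos by simp
  have r_le: "r \<le> 1" unfolding r_def prob_BS[symmetric, of 0] by simp
  have ind: "NS.indep_vars (\<lambda>m. PiM (K m) (\<lambda>_. UM \<eta>)) (\<lambda>m \<omega>. restrict (\<lambda>i. \<omega> i) (K m)) UNIV"
  proof (rule NS.indep_vars_restrict[OF indep_coords[OF eta]])
    show "disjoint_family_on K UNIV"
      unfolding disjoint_family_on_def
    proof (intro ballI impI)
      fix m m' :: nat assume "m \<noteq> m'"
      show "K m \<inter> K m' = {}"
      proof (rule ccontr)
        assume "K m \<inter> K m' \<noteq> {}"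
        then obtain i t where "(i,t) \<in> K m" "(i,t) \<in> K m'" by auto
        then have "t div L = m" "t div L = m'" unfolding K_def
          by (auto intro!: div_nat_eqI simp: mult.commute)
        with \<open>m \<noteq> m'\<close> show False by simp
      qed
    qed
  qed auto
  define A where "A = (\<lambda>m. {x\<in>space (PiM (K m) (\<lambda>_. UM \<eta>)). \<not> (\<forall>q\<in>K m. c < x q)})"
  have Am: "A m \<in> sets (PiM (K m) (\<lambda>_. UM \<eta>))" for m
    unfolding A_def
  proof (rule sets.sets_Collect_neg, rule sets.sets_Collect_finite_All[OF _ Kfin])
    fix q assume q: "q \<in> K m"
    have [measurable]: "(\<lambda>x. x q) \<in> borel_measurable (PiM (K m) (\<lambda>_. UM \<eta>))"
      using measurable_component_singleton[OF q, of "\<lambda>_. UM \<eta>"] UM_meas_eq by metis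
    show "{x \<in> space (PiM (K m) (\<lambda>_. UM \<eta>)). c < x q} \<in> sets (PiM (K m) (\<lambda>_. UM \<eta>))"
      by measurable
  qed
  have pre: "(\<lambda>\<omega>. restrict (\<lambda>i. \<omega> i) (K m)) -` A m \<inter> space (noise_space \<eta>) = space (noise_space \<eta>) - BS m" for m
    unfolding A_def BS_def by (auto simp: space_PiM)
  have blocks: "NS.prob (\<Inter>m\<in>{..<n}. space (noise_space \<eta>) - BS m) = (1 - r) ^ n" if n: "0 < n" for n
  proof -
    have "NS.prob (\<Inter>m\<in>{..<n}. (\<lambda>\<omega>. restrict (\<lambda>i. \<omega> i) (K m)) -` A m \<inter> space (noise_space \<eta>))
        = (\<Prod>m\<in>{..<n}. NS.prob ((\<lambda>\<omega>. restrict (\<lambda>i. \<omega> i) (K m)) -` A m \<inter> space (noise_space \<eta>)))"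
      using n by (intro NS.indep_varsD[OF ind]) (auto simp: Am)
    also have "\<dots> = (\<Prod>m\<in>{..<n}. 1 - r)"
      unfolding pre using BS_ev by (simp add: NS.prob_compl prob_BS r_def)
    finally show ?thesis unfolding pre by simp
  qed
  define Z where "Z = {\<omega>\<in>space (noise_space \<eta>). \<not> (\<exists>m. \<forall>i\<in>V. \<forall>t. m*L \<le> t \<and> t < m*L + L \<longrightarrow> c < \<omega> (i,t))}"
  have Zev: "Z \<in> NS.events" unfolding Z_def by measurable
  have Zsub: "Z \<subseteq> (\<Inter>m\<in>{..<n}. space (noise_space \<eta>) - BS m)" if "0 < n" for n
  proof
    fix \<omega> assume w: "\<omega> \<in> Z"
    show "\<omega> \<in> (\<Inter>m\<in>{..<n}. space (noise_space \<eta>) - BS m)"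
    proof (intro INT_I DiffI)
      fix m assume "m \<in> {..<n}"
      show "\<omega> \<in> space (noise_space \<eta>)" using w by (simp add: Z_def)
      show "\<omega> \<notin> BS m"
      proof
        assume "\<omega> \<in> BS m"
        then have "\<forall>i\<in>V. \<forall>t. m*L \<le> t \<and> t < m*L + L \<longrightarrow> c < \<omega> (i,t)"
          by (auto simp: BS_def K_def)
        then show False using w unfolding Z_def by blast
      qed
    qed
  qed
  have "NS.prob Z \<le> (1 - r) ^ n" if "1 \<le> n" for n
  proof -
    have "NS.prob Z \<le> NS.prob (\<Inter>m\<in>{..<n}. space (noise_space \<eta>) - BS m)"
    proof (rule NS.finite_measure_mono)
      show "Z \<subseteq> (\<Inter>m\<in>{..<n}. space (noise_space \<eta>) - BS m)" using that Zsub[of n] by simp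
      have "0 \<in> {..<n}" using that by simp
      then have "{..<n} \<noteq> {}" by blast
      then show "(\<Inter>m\<in>{..<n}. space (noise_space \<eta>) - BS m) \<in> NS.events"
        using BS_ev by (intro sets.finite_INT) auto
    qed
    then show ?thesis using blocks[of n] that by simp
  qed
  moreover have "(\<lambda>n. (1 - r) ^ n) \<longlonglongrightarrow> 0"
    using r_pos r_le by (intro LIMSEQ_power_zero) auto
  ultimately have "NS.prob Z \<le> 0"
    by (intro LIMSEQ_le_const[of "\<lambda>n. (1 - r) ^ n"]) auto
  then have "NS.prob Z = 0" using measure_nonneg[of "noise_space \<eta>" Z] by linarith
  then have AE0: "AE \<omega> in noise_space \<eta>. \<not> (\<not> (\<exists>m. \<forall>i\<in>V. \<forall>t. m*L \<le> t \<and> t < m*L + L \<longrightarrow> c < \<omega> (i,t)))"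
    apply -
    apply (rule NS.prob_Collect_eq_0[THEN iffD1])
    using Zev apply (simp only: Z_def)
    apply (simp only: Z_def[symmetric])
    done
  then show ?thesis by (rule eventually_mono) blast
qed

theorem proposition1:
  fixes V :: "'a set" and E :: "'a \<Rightarrow> 'a \<Rightarrow> bool" and \<eta> :: real
  assumes "simple_graph V E" and "graph_connected V E" and "card V \<ge> 2"
    and "\<eta> > 0"
  shows "(1 - 2 / real (max_nbhd V E) < \<eta> \<and> \<eta> \<le> 1 \<longrightarrow>
           (\<forall>x0. (\<forall>i\<in>V. x0 i \<in> {1, -1}) \<longrightarrow>
             (AE \<omega> in noise_space \<eta>. \<exists>K. (\<forall>k\<ge>K. \<forall>i\<in>V. traj V E x0 \<omega> k i = 1)
                                       \<or> (\<forall>k\<ge>K. \<forall>i\<in>V. traj V E x0 \<omega> k i = -1))))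
       \<and> (\<eta> > 1 \<longrightarrow>
           (\<forall>x0. (\<forall>i\<in>V. x0 i \<in> {1, -1}) \<longrightarrow>
             (\<lambda>k. \<integral>\<omega>. state_sum V (traj V E x0 \<omega> k) \<partial>noise_space \<eta>) \<longlonglongrightarrow> 0))"
proof (intro conjI impI allI)
  have fin: "finite V" using assms(1) by (simp add: simple_graph_def)
  have ne: "V \<noteq> {}" using assms(3) by auto
  have L: "0 < card V" using assms(3) by simp
  {
    fix x0 :: "'a \<Rightarrow> int"
    assume h: "1 - 2 / real (max_nbhd V E) < \<eta> \<and> \<eta> \<le> 1" and x0: "\<forall>i\<in>V. x0 i \<in> {1, -1}"
    have "AE \<omega> in noise_space \<eta>. \<forall>i\<in>V. \<forall>t. -\<eta> \<le> \<omega> (i,t) \<and> \<omega> (i,t) < \<eta>"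
      by (rule AE_good[OF assms(4) fin])
    moreover have "AE \<omega> in noise_space \<eta>. \<exists>m. \<forall>i\<in>V. \<forall>t. m*card V \<le> t \<and> t < m*card V + card V \<longrightarrow> 1 - 2 / real (max_nbhd V E) < \<omega> (i,t)"
      using h by (intro AE_block[OF assms(4) _ fin ne L]) auto
    ultimately show "AE \<omega> in noise_space \<eta>. \<exists>K. (\<forall>k\<ge>K. \<forall>i\<in>V. traj V E x0 \<omega> k i = 1)
                                       \<or> (\<forall>k\<ge>K. \<forall>i\<in>V. traj V E x0 \<omega> k i = -1)"
    proof eventually_elim
      case (elim \<omega>)
      then obtain m where "\<forall>i\<in>V. \<forall>t. m*card V \<le> t \<and> t < m*card V + card V \<longrightarrow> 1 - 2 / real (max_nbhd V E) < \<omega> (i,t)"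
        by blast
      then show ?case using elim h by (intro det_consensus[OF assms(1,2) x0, of \<eta> _ "m * card V"]) auto
    qed
  }
  {
    fix x0 :: "'a \<Rightarrow> int"
    assume "1 < \<eta>" and x0: "\<forall>i\<in>V. x0 i \<in> {1, -1}"
    then show "(\<lambda>k. \<integral>\<omega>. state_sum V (traj V E x0 \<omega> k) \<partial>noise_space \<eta>) \<longlonglongrightarrow> 0"
      using part2[OF _ fin x0] by blast
  }
qed

end
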